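(* Consider the closed-loop system described in the context, with the controller given by the Hamiltonian parameterization $a=J_0R+bJb^{T}J_0/2$, $c=J_2\mathbf{I}^{T}b^{T}J_0$ for fixed $b$, and suppose $\mathcal{A}$ is Hurwitz. Then the second Fréchet derivative of $E$ with respect to $R\in\mathbb{S}_n$ is the self-adjoint operator on $\mathbb{S}_n$ $$\partial_R^2E=4\,\mathcal{J}^{\dagger}\big(\mathcal{Q}\mathcal{L}_{\mathcal{A}}\mathcal{S}\mathcal{P}+\mathcal{P}\mathcal{L}_{\mathcal{A}^{T}}\mathcal{S}\mathcal{Q}\big)\mathcal{J},$$ where $\mathcal{J}:\mathbb{S}_n\to\mathbb{R}^{2n\times2n}$, $\mathcal{J}(M):=\begin{bmatrix}0_n\\ J_0\end{bmatrix}M\begin{bmatrix}0_n & I_n\end{bmatrix}$, $\mathcal{J}^{\dagger}$ is its adjoint with respect to the Frobenius inner products, $\mathcal{Q}(X):=QX$ and $\mathcal{P}(X):=XP$ for $X\in\mathbb{R}^{2n\times 2n}$, $\mathcal{S}(X):=(X+X^{T})/2$, and for a Hurwitz matrix $F$, $\mathcal{L}_F(M):=\int_0^{+\infty}e^{Ft}Me^{F^{T}t}\,dt$ (the unique solution $N$ of $FN+NF^{T}+M=0$).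
   Context: Let $n=2\nu$, $m_1=2\mu_1$, $m_2=2\mu_2$, and let $p,p_0$ be positive integers. Plant matrices: $A\in\mathbb{R}^{n\times n}$, $B_1\in\mathbb{R}^{n\times m_1}$, $B_2\in\mathbb{R}^{n\times m_2}$, $C\in\mathbb{R}^{p\times n}$, $D\in\mathbb{R}^{p\times m_1}$, $C_0\in\mathbb{R}^{p_0\times n}$, $D_0\in\mathbb{R}^{p_0\times m_2}$. $J_0,J_1,J_2$ are the canonical real antisymmetric matrices of orders $n,m_1,m_2$ (block diagonal with copies of $\begin{bmatrix}0&1\\-1&0\end{bmatrix}$). $J:=\begin{bmatrix}J_2&0\\0&DJ_1D^{T}\end{bmatrix}$, $\mathbf{I}:=\begin{bmatrix}I_{m_2}\\0\end{bmatrix}\in\mathbb{R}^{(m_2+p)\times m_2}$, $\mathbb{S}_n$ is the space of real symmetric $n\times n$ matrices. $b\in\mathbb{R}^{n\times(m_2+p)}$, $B:=[\,B_1\ \ B_2\,]$, $\mathbf{C}:=\begin{bmatrix}0\\ C\end{bmatrix}$, $\mathbf{D}:=\begin{bmatrix}0 & I_{m_2}\\ D & 0\end{bmatrix}$. Closed-loop matrices: $\mathcal{A}:=\begin{bmatrix}A & B_2c\\ b\mathbf{C} & a\end{bmatrix}$, $\mathcal{B}:=\begin{bmatrix}B\\ b\mathbf{D}\end{bmatrix}$, $\mathcal{C}:=\begin{bmatrix}C_0 & D_0c\end{bmatrix}$. When $\mathcal{A}$ is Hurwitz, $P,Q$ are the unique solutions of $\mathcal{A}P+P\mathcal{A}^{T}+\mathcal{B}\mathcal{B}^{T}=0$,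 $\mathcal{A}^{T}Q+Q\mathcal{A}+\mathcal{C}^{T}\mathcal{C}=0$, and $E:=\mathrm{Tr}(\mathcal{C}P\mathcal{C}^{T})$. *)

theory Defs
  imports "HOL-Analysis.Analysis"
begin

definition blk :: "real^'c^'a \<Rightarrow> real^'d^'a \<Rightarrow> real^'c^'b \<Rightarrow> real^'d^'b
                   \<Rightarrow> real^('c + 'd)^('a + 'b)" where
  "blk X11 X12 X21 X22 = (\<chi> i j. (case i of
       Inl i1 \<Rightarrow> (case j of Inl j1 \<Rightarrow> X11 $ i1 $ j1 | Inr j2 \<Rightarrow> X12 $ i1 $ j2)
     | Inr i2 \<Rightarrow> (case j of Inl j1 \<Rightarrow> X21 $ i2 $ j1 | Inr j2 \<Rightarrow> X22 $ i2 $ j2)))"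

definition vstack :: "real^'c^'a \<Rightarrow> real^'c^'b \<Rightarrow> real^'c^('a + 'b)" where
  "vstack X Y = (\<chi> i. (case i of Inl i1 \<Rightarrow> X $ i1 | Inr i2 \<Rightarrow> Y $ i2))"

definition hstack :: "real^'b^'a \<Rightarrow> real^'c^'a \<Rightarrow> real^('b + 'c)^'a" where
  "hstack X Y = (\<chi> i j. (case j of Inl j1 \<Rightarrow> X $ i $ j1 | Inr j2 \<Rightarrow> Y $ i $ j2))"

text \<open>Indices of a finite linearly ordered type are numbered 0,1,2,... by their rank;
  the canonical matrix is block diagonal with copies of [[0,1],[-1,0]].\<close>

definition idx_rank :: "'k::{finite,linorder} \<Rightarrow> nat" where
  "idx_rank i = card {j. j < i}"

definition canonJ :: "real^('k::{finite,linorder})^('k::{finite,linorder})" where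
  "canonJ = (\<chi> i j.
     if even (idx_rank i) \<and> idx_rank j = idx_rank i + 1 then 1
     else if odd (idx_rank i) \<and> idx_rank i = idx_rank j + 1 then -1 else 0)"

definition hurwitz :: "real^'k^'k \<Rightarrow> bool" where
  "hurwitz F \<longleftrightarrow> (\<forall>z::complex. det (mat z - map_matrix complex_of_real F) = 0 \<longrightarrow> Re z < 0)"

definition lyap :: "real^'k^'k \<Rightarrow> real^'k^'k \<Rightarrow> real^'k^'k" where
  "lyap F M = (THE N. F ** N + N ** transpose F + M = 0)"

definition symm_mats :: "(real^'k^'k) set" where
  "symm_mats = {M. transpose M = M}"

definition symp :: "real^'k^'k \<Rightarrow> real^'k^'k" where
  "symp X = (1/2) *\<^sub>R (X + transpose X)"

definition bigJ :: "real^('m1::{finite,linorder})^('p::finite) \<Rightarrow> real^(('m2::{finite,linorder}) + ('p::finite))^(('m2::{finite,linorder}) + ('p::finite))" where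
  "bigJ D = blk (canonJ :: real^('m2::{finite,linorder})^('m2::{finite,linorder})) 0 0 (D ** (canonJ :: real^('m1::{finite,linorder})^('m1::{finite,linorder})) ** transpose D)"

definition bI :: "real^('m2::{finite,linorder})^(('m2::{finite,linorder}) + ('p::finite))" where
  "bI = vstack (mat 1) 0"

definition bC :: "real^('n::{finite,linorder})^('p::finite) \<Rightarrow> real^('n::{finite,linorder})^(('m2::{finite,linorder}) + ('p::finite))" where
  "bC C = vstack 0 C"

definition bD :: "real^('m1::{finite,linorder})^('p::finite) \<Rightarrow> real^(('m1::{finite,linorder}) + ('m2::{finite,linorder}))^(('m2::{finite,linorder}) + ('p::finite))" where
  "bD D = blk 0 (mat 1) D 0"

definition ctrl_a :: "real^('m1::{finite,linorder})^('p::finite) \<Rightarrow> real^(('m2::{finite,linorder}) + ('p::finite))^('n::{finite,linorder})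
     \<Rightarrow> real^('n::{finite,linorder})^('n::{finite,linorder}) \<Rightarrow> real^('n::{finite,linorder})^('n::{finite,linorder})" where
  "ctrl_a D b R = canonJ ** R + (1/2) *\<^sub>R (b ** bigJ D ** transpose b ** canonJ)"

definition ctrl_c :: "real^(('m2::{finite,linorder}) + ('p::finite))^('n::{finite,linorder}) \<Rightarrow> real^('n::{finite,linorder})^('m2::{finite,linorder})" where
  "ctrl_c b = canonJ ** transpose (bI :: real^('m2::{finite,linorder})^(('m2::{finite,linorder}) + ('p::finite))) ** transpose b ** canonJ"

definition clA :: "real^('n::{finite,linorder})^('n::{finite,linorder}) \<Rightarrow> real^('m2::{finite,linorder})^('n::{finite,linorder}) \<Rightarrow> real^('n::{finite,linorder})^('p::finite) \<Rightarrow> real^('m1::{finite,linorder})^('p::finite)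
     \<Rightarrow> real^(('m2::{finite,linorder}) + ('p::finite))^('n::{finite,linorder}) \<Rightarrow> real^('n::{finite,linorder})^('n::{finite,linorder})
     \<Rightarrow> real^(('n::{finite,linorder}) + ('n::{finite,linorder}))^(('n::{finite,linorder}) + ('n::{finite,linorder}))" where
  "clA A B2 C D b R = blk A (B2 ** ctrl_c b) (b ** bC C) (ctrl_a D b R)"

definition clB :: "real^('m1::{finite,linorder})^('n::{finite,linorder}) \<Rightarrow> real^('m2::{finite,linorder})^('n::{finite,linorder}) \<Rightarrow> real^('m1::{finite,linorder})^('p::finite)
     \<Rightarrow> real^(('m2::{finite,linorder}) + ('p::finite))^('n::{finite,linorder}) \<Rightarrow> real^(('m1::{finite,linorder}) + ('m2::{finite,linorder}))^(('n::{finite,linorder}) + ('n::{finite,linorder}))" where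
  "clB B1 B2 D b = vstack (hstack B1 B2) (b ** bD D)"

definition clC :: "real^('n::{finite,linorder})^('p0::finite) \<Rightarrow> real^('m2::{finite,linorder})^('p0::finite) \<Rightarrow> real^(('m2::{finite,linorder}) + ('p::finite))^('n::{finite,linorder})
     \<Rightarrow> real^(('n::{finite,linorder}) + ('n::{finite,linorder}))^('p0::finite)" where
  "clC C0 D0 b = hstack C0 (D0 ** ctrl_c b)"

definition gramP where
  "gramP A B1 B2 C D b R = lyap (clA A B2 C D b R) (clB B1 B2 D b ** transpose (clB B1 B2 D b))"

definition gramQ where
  "gramQ A B2 C D C0 D0 b R = lyap (transpose (clA A B2 C D b R)) (transpose (clC C0 D0 b) ** clC C0 D0 b)"

definition costE where
  "costE A B1 B2 C D C0 D0 b R =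
     trace (clC C0 D0 b ** gramP A B1 B2 C D b R ** transpose (clC C0 D0 b))"

definition calJ :: "real^('n::{finite,linorder})^('n::{finite,linorder}) \<Rightarrow> real^(('n::{finite,linorder}) + ('n::{finite,linorder}))^(('n::{finite,linorder}) + ('n::{finite,linorder}))" where
  "calJ M = vstack (0 :: real^('n::{finite,linorder})^('n::{finite,linorder})) canonJ ** M ** hstack (0 :: real^('n::{finite,linorder})^('n::{finite,linorder})) (mat 1)"

text \<open>Adjoint of calJ : S_n \<rightarrow> R^{2n x 2n} w.r.t. the Frobenius inner products
  (the Frobenius inner product is the inner product of real^'a^'b).\<close>
definition calJ_adj :: "real^(('n::{finite,linorder}) + ('n::{finite,linorder}))^(('n::{finite,linorder}) + ('n::{finite,linorder})) \<Rightarrow> real^('n::{finite,linorder})^('n::{finite,linorder})" where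
  "calJ_adj X = (THE Y. Y \<in> symm_mats \<and> (\<forall>M\<in>symm_mats. inner (calJ M) X = inner M Y))"

definition hessE where
  "hessE A B1 B2 C D C0 D0 b R M =
     (let Acl = clA A B2 C D b R; P = gramP A B1 B2 C D b R; Q = gramQ A B2 C D C0 D0 b R;
          X = calJ M
      in 4 *\<^sub>R calJ_adj (Q ** lyap Acl (symp (X ** P)) + lyap (transpose Acl) (symp (Q ** X)) ** P))"

end

theory Submission
  imports Defs "HOL-Computational_Algebra.Fundamental_Theorem_Algebra"
begin

definition smat :: "complex \<Rightarrow> complex^'a^'b \<Rightarrow> complex^'a^'b" where
  "smat c X = (\<chi> i j. c * X$i$j)"

definition mpow :: "complex^'k^'k \<Rightarrow> nat \<Rightarrow> complex^'k^'k" where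
  "mpow M n = ((\<lambda>X. M ** X) ^^ n) (mat 1)"

lemma mpow_0[simp]: "mpow M 0 = mat 1" by (simp add: mpow_def)
lemma mpow_Suc[simp]: "mpow M (Suc n) = M ** mpow M n" by (simp add: mpow_def)

definition meval :: "complex poly \<Rightarrow> complex^'k^'k \<Rightarrow> complex^'k^'k" where
  "meval p M = (\<Sum>i\<le>degree p. smat (coeff p i) (mpow M i))"

lemma smat_0[simp]: "smat 0 X = 0" by (simp add: smat_def vec_eq_iff)
lemma smat_zero[simp]: "smat c 0 = 0" by (simp add: smat_def vec_eq_iff)
lemma smat_add_left: "smat (a + b) X = smat a X + smat b X"
  by (simp add: smat_def vec_eq_iff algebra_simps)
lemma smat_add_right: "smat a (X + Y) = smat a X + smat a Y"
  by (simp add: smat_def vec_eq_iff algebra_simps)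
lemma smat_smat: "smat a (smat b X) = smat (a*b) X"
  by (simp add: smat_def vec_eq_iff algebra_simps)
lemma smat_sum: "smat a (sum f S) = (\<Sum>i\<in>S. smat a (f i))"
  by (induction S rule: infinite_finite_induct) (auto simp: smat_add_right)
lemma smat_neg1[simp]: "smat (-1) X = - X" by (simp add: smat_def vec_eq_iff)
lemma smat_1[simp]: "smat 1 X = X" by (simp add: smat_def vec_eq_iff)
lemma smat_mat: "smat c (mat 1) = mat c" by (simp add: smat_def mat_def vec_eq_iff)
lemma mul_smat: "A ** smat c X = smat c (A ** X)"
  by (simp add: smat_def matrix_matrix_mult_def vec_eq_iff sum_distrib_left algebra_simps)
lemma smat_mul: "smat c X ** A = smat c (X ** A)"
  by (simp add: smat_def matrix_matrix_mult_def vec_eq_iff sum_distrib_left algebra_simps)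
lemma mat_mul_eq_smat: "mat c ** X = smat c X"
  by (metis matrix_mul_lid smat_mat smat_mul)
lemma matmul_sum_right: "A ** sum f S = (\<Sum>i\<in>S. A ** f i)"
  by (induction S rule: infinite_finite_induct) (auto simp: matrix_add_ldistrib)
lemma matrix_add_rdistrib': "(A + B) ** C = A ** C + B ** (C::'a::comm_semiring_1^_^_)"
  by (vector matrix_matrix_mult_def sum.distrib[symmetric] field_simps)
lemma matrix_sub_rdistrib': "(A - B) ** C = A ** C - B ** (C::'a::comm_ring_1^_^_)"
  by (simp add: matrix_matrix_mult_def vec_eq_iff sum_subtractf[symmetric] left_diff_distrib)
lemma matmul_sum_left: "sum f S ** A = (\<Sum>i\<in>S. f i ** (A::'a::comm_semiring_1^_^_))"
  by (induction S rule: infinite_finite_induct) (auto simp: matrix_add_rdistrib')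
lemma smat_real: "smat (complex_of_real r) X = r *\<^sub>R X"
  by (simp add: smat_def vec_eq_iff) (simp add: scaleR_conv_of_real)

lemma meval_eq:
  assumes "degree p < N"
  shows "meval p M = (\<Sum>i<N. smat (coeff p i) (mpow M i))"
proof -
  have "(\<Sum>i<N. smat (coeff p i) (mpow M i)) = (\<Sum>i\<le>degree p. smat (coeff p i) (mpow M i))"
    apply (rule sum.mono_neutral_right)
    using assms by (auto simp: coeff_eq_0)
  then show ?thesis by (simp add: meval_def)
qed

lemma meval_add: "meval (p + q) M = meval p M + meval q M"
proof -
  define N where "N = Suc (max (degree p) (degree q))"
  have "degree (p+q) < N" using degree_add_le_max[of p q] unfolding N_def by linarith
  then show ?thesis
    by (simp add: meval_eq[of _ N] N_def smat_add_left sum.distrib)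
qed

lemma meval_smult: "meval (smult c p) M = smat c (meval p M)"
proof -
  have d: "degree (smult c p) < Suc (degree p)" by (meson degree_smult_le le_imp_less_Suc)
  show ?thesis
    unfolding meval_eq[OF d] meval_eq[of p "Suc (degree p)" M, OF lessI]
    by (simp add: smat_sum smat_smat del: sum.lessThan_Suc)
qed

lemma meval_0[simp]: "meval 0 M = 0" by (simp add: meval_def)

lemma meval_sum: "meval (sum f S) M = (\<Sum>i\<in>S. meval (f i) M)"
  by (induction S rule: infinite_finite_induct) (auto simp: meval_add)

lemma meval_monom: "meval (monom c n) M = smat c (mpow M n)"
  by (simp add: meval_eq[of _ "Suc n"] coeff_monom degree_monom_le le_imp_less_Suc
      if_distrib sum.delta cong: if_cong)

lemma meval_pCons0: "meval (pCons 0 p) M = M ** meval p M"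
proof -
  have d: "degree (pCons 0 p) < Suc (Suc (degree p))"
    by (metis degree_pCons_le le_imp_less_Suc)
  have "meval (pCons 0 p) M = (\<Sum>i<Suc (Suc (degree p)). smat (coeff (pCons 0 p) i) (mpow M i))"
    by (rule meval_eq[OF d])
  also have "\<dots> = (\<Sum>i<Suc (degree p). smat (coeff p i) (mpow M (Suc i)))"
    by (subst sum.lessThan_Suc_shift) simp
  also have "\<dots> = M ** meval p M"
    unfolding meval_eq[of p "Suc (degree p)" M, OF lessI]
    by (simp add: matmul_sum_right mul_smat del: sum.lessThan_Suc)
  finally show ?thesis .
qed

lemma meval_const: "meval [:c:] M = mat c"
  by (simp add: meval_def smat_mat)

lemma meval_lin: "meval ([:-z, 1:] * q) M = (M - mat z) ** meval q M"
proof -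
  have e: "[:-z, 1:] * q = smult (-z) q + pCons 0 q" by (simp add: mult_pCons_left)
  have "meval ([:-z, 1:] * q) M = smat (-z) (meval q M) + M ** meval q M"
    unfolding e meval_add meval_smult meval_pCons0 ..
  also have "\<dots> = (M - mat z) ** meval q M"
    by (simp add: matrix_sub_rdistrib' mat_mul_eq_smat smat_def vec_eq_iff)
  finally show ?thesis .
qed

lemma mpow_comm: "F ** X = X ** G \<Longrightarrow> mpow F n ** X = X ** mpow G n"
proof (induction n)
  case (Suc n)
  then show ?case by (simp add: matrix_mul_assoc[symmetric]) (metis matrix_mul_assoc)
qed simp

lemma meval_comm: assumes "F ** X = X ** G" shows "meval p F ** X = X ** meval p G"
  unfolding meval_def matmul_sum_left matmul_sum_right
  by (rule sum.cong) (simp_all add: smat_mul mul_smat mpow_comm[OF assms])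

lemma col_zero:
  fixes M :: "'a::comm_semiring_1^'k^'k" and Y :: "'a^'m^'k"
  assumes "M ** Y = 0" "Y \<noteq> 0"
  shows "\<exists>v. v \<noteq> 0 \<and> M *v v = 0"
proof -
  obtain i j where ij: "Y$i$j \<noteq> 0" using assms(2) by (metis vec_eq_iff zero_index)
  have "M *v column j Y = column j (M ** Y)"
    by (simp add: matrix_vector_mult_def column_def matrix_matrix_mult_def vec_eq_iff)
  then have "M *v column j Y = 0" using assms(1) by (simp add: column_def vec_eq_iff)
  moreover have "column j Y \<noteq> 0" using ij by (metis column_def vec_lambda_beta zero_index)
  ultimately show ?thesis by blast
qed

lemma smat_eq_0: "c \<noteq> 0 \<Longrightarrow> smat c X = 0 \<Longrightarrow> X = 0"
  by (simp add: smat_def vec_eq_iff)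

lemma sing_root:
  fixes F :: "complex^'k^'k" and X :: "complex^'m^'k"
  shows "p \<noteq> 0 \<Longrightarrow> meval p F ** X = 0 \<Longrightarrow> X \<noteq> 0 \<Longrightarrow>
    \<exists>z. poly p z = 0 \<and> (\<exists>v. v \<noteq> 0 \<and> (F - mat z) *v v = 0)"
proof (induction "degree p" arbitrary: p rule: less_induct)
  case less
  show ?case
  proof (cases "degree p = 0")
    case True
    then obtain c where p: "p = [:c:]" by (metis degree_eq_zeroE)
    with less.prems have "c \<noteq> 0" by auto
    moreover have "smat c X = 0" using less.prems(2) by (simp add: p meval_const mat_mul_eq_smat)
    ultimately show ?thesis using less.prems(3) smat_eq_0 by blast
  next
    case False
    then obtain z where z: "poly p z = 0"
      using fundamental_theorem_of_algebra[of p] constant_degree[of p] by auto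
    then obtain q where pq: "p = [:-z,1:] * q" using poly_eq_0_iff_dvd dvd_def by blast
    have q0: "q \<noteq> 0" using less.prems(1) pq by auto
    have dq: "degree q < degree p" unfolding pq using q0 by (subst degree_mult_eq) auto
    have Y: "(F - mat z) ** (meval q F ** X) = 0"
      using less.prems(2) unfolding pq meval_lin by (simp add: matrix_mul_assoc)
    show ?thesis
    proof (cases "meval q F ** X = 0")
      case True
      from less.hyps[OF dq q0 True less.prems(3)] obtain w where
        "poly q w = 0" "\<exists>v. v \<noteq> 0 \<and> (F - mat w) *v v = 0" by blast
      then show ?thesis by (auto simp: pq)
    next
      case False
      then show ?thesis using col_zero[OF Y False] z by blast
    qed
  qed
qed

lemma reduce_poly:
  fixes G :: "complex^'k^'k"
  shows "p \<noteq> 0 \<Longrightarrow> meval p G = 0 \<Longrightarrow>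
    \<exists>p'. p' \<noteq> 0 \<and> meval p' G = 0 \<and> (\<forall>z. poly p' z = 0 \<longrightarrow> (\<exists>v. v \<noteq> 0 \<and> (G - mat z) *v v = 0))"
proof (induction "degree p" arbitrary: p rule: less_induct)
  case less
  show ?case
  proof (cases "\<forall>z. poly p z = 0 \<longrightarrow> (\<exists>v. v \<noteq> 0 \<and> (G - mat z) *v v = 0)")
    case True
    then show ?thesis using less.prems by blast
  next
    case False
    then obtain z where z: "poly p z = 0" and ns: "\<not> (\<exists>v. v \<noteq> 0 \<and> (G - mat z) *v v = 0)" by blast
    then obtain q where pq: "p = [:-z,1:] * q" using poly_eq_0_iff_dvd dvd_def by blast
    have q0: "q \<noteq> 0" using less.prems(1) pq by auto
    have dq: "degree q < degree p" unfolding pq using q0 by (subst degree_mult_eq) auto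
    have Y: "(G - mat z) ** meval q G = 0"
      using less.prems(2) unfolding pq meval_lin .
    have "meval q G = 0" using col_zero[OF Y] ns by blast
    from less.hyps[OF dq q0 this] show ?thesis .
  qed
qed

lemma annih:
  fixes G :: "complex^'k^'k"
  shows "\<exists>p. p \<noteq> 0 \<and> meval p G = 0"
proof -
  define N where "N = DIM(complex^'k^'k)"
  show ?thesis
  proof (cases "inj_on (mpow G) {..N}")
    case False
    then obtain i j where ij: "i \<noteq> j" "mpow G i = mpow G j"
      unfolding inj_on_def by blast
    define p where "p = monom (1::complex) i + monom (-1) j"
    have "coeff p i = 1" using ij by (simp add: p_def coeff_monom)
    then have "p \<noteq> 0" by auto
    moreover have "meval p G = 0"
      using ij by (simp add: p_def meval_add meval_monom smat_add_left[symmetric])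
    ultimately show ?thesis by blast
  next
    case True
    define S where "S = mpow G ` {..N}"
    have "card S = Suc N" using True by (simp add: S_def card_image)
    then have "\<not> independent S" using independent_bound[of S] N_def by auto
    then obtain t u where t: "finite t" "t \<subseteq> S" "(\<Sum>v\<in>t. u v *\<^sub>R v) = 0"
      and "\<exists>v\<in>t. u v \<noteq> 0"
      unfolding dependent_explicit by blast
    then obtain v0 where v0: "v0 \<in> t" "u v0 \<noteq> 0" by blast
    define I where "I = {i\<in>{..N}. mpow G i \<in> t}"
    have tI: "t = mpow G ` I" using t(2) unfolding S_def I_def by auto
    have injI: "inj_on (mpow G) I" using True unfolding I_def by (rule inj_on_subset) auto
    have fI: "finite I" unfolding I_def by auto
    define p where "p = (\<Sum>i\<in>I. monom (complex_of_real (u (mpow G i))) i)"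
    have "meval p G = (\<Sum>i\<in>I. smat (of_real (u (mpow G i))) (mpow G i))"
      by (simp add: p_def meval_sum meval_monom)
    also have "\<dots> = (\<Sum>i\<in>I. u (mpow G i) *\<^sub>R mpow G i)" by (simp add: smat_real)
    also have "\<dots> = (\<Sum>v\<in>t. u v *\<^sub>R v)" using tI injI by (simp add: sum.reindex)
    finally have m0: "meval p G = 0" using t(3) by simp
    obtain i0 where i0: "i0 \<in> I" "mpow G i0 = v0" using tI v0 by auto
    have "coeff p i0 = (\<Sum>i\<in>I. if i = i0 then complex_of_real (u (mpow G i)) else 0)"
      by (simp add: p_def coeff_sum coeff_monom)
    also have "\<dots> = of_real (u v0)" using fI i0 by simp
    finally have "p \<noteq> 0" using v0 by auto
    with m0 show ?thesis by blast
  qed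
qed

lemma sylv:
  fixes F :: "complex^'k^'k" and G :: "complex^'m^'m" and X :: "complex^'m^'k"
  assumes "F ** X = X ** G" "X \<noteq> 0"
  shows "\<exists>z. (\<exists>v. v \<noteq> 0 \<and> (F - mat z) *v v = 0) \<and> (\<exists>v. v \<noteq> 0 \<and> (G - mat z) *v v = 0)"
proof -
  obtain p where "p \<noteq> 0" "meval p G = 0" using annih by blast
  then obtain p' where p': "p' \<noteq> 0" "meval p' G = 0"
    "\<forall>z. poly p' z = 0 \<longrightarrow> (\<exists>v. v \<noteq> 0 \<and> (G - mat z) *v v = 0)"
    using reduce_poly by blast
  have "meval p' F ** X = 0" using meval_comm[OF assms(1)] p'(2) by simp
  from sing_root[OF p'(1) this assms(2)] p'(3) show ?thesis by blast
qed
lemma sing_det: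
  fixes M :: "'a::field^'k^'k"
  assumes "v \<noteq> 0" "M *v v = 0"
  shows "det M = 0"
proof (rule ccontr)
  assume "det M \<noteq> 0"
  then have "invertible M" using invertible_det_nz by blast
  then obtain B where "B ** M = mat 1" unfolding invertible_def by blast
  then have "v = B *v (M *v v)" by (simp add: matrix_vector_mul_assoc)
  with assms show False by simp
qed

definition lop :: "real^'k^'k \<Rightarrow> real^'k^'k \<Rightarrow> real^'k^'k" where
  "lop F Y = F ** Y + Y ** transpose F"

lemma transpose_diff: "transpose (A - B) = transpose A - transpose B"
  by (simp add: transpose_def vec_eq_iff)
lemma transpose_add: "transpose (A + B) = transpose A + transpose B"
  by (simp add: transpose_def vec_eq_iff)

lemma map_matrix_mult: "map_matrix complex_of_real (A ** B) = map_matrix of_real A ** map_matrix of_real B"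
  by (simp add: matrix_matrix_mult_def vec_eq_iff)

lemma hurwitz_lop0:
  fixes F :: "real^'k^'k"
  assumes h: "hurwitz F" and Y: "lop F Y = 0"
  shows "Y = 0"
proof (rule ccontr)
  assume Y0: "Y \<noteq> 0"
  define Fc where "Fc = map_matrix complex_of_real F"
  define Yc where "Yc = map_matrix complex_of_real Y"
  have "F ** Y = - (Y ** transpose F)" using Y unfolding lop_def by (simp add: add_eq_0_iff)
  then have "map_matrix complex_of_real (F ** Y) = map_matrix of_real (- (Y ** transpose F))" by simp
  then have e: "Fc ** Yc = Yc ** (- transpose Fc)"
    unfolding Fc_def Yc_def map_matrix_mult[symmetric]
    by (simp add: matrix_matrix_mult_def vec_eq_iff transpose_def sum_negf)
  have "Yc \<noteq> 0" using Y0 unfolding Yc_def by (simp add: vec_eq_iff)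
  from sylv[OF e this] obtain z v w where
    v: "v \<noteq> 0" "(Fc - mat z) *v v = 0" and w: "w \<noteq> 0" "(- transpose Fc - mat z) *v w = 0"
    by blast
  have "(mat z - Fc) *v v = 0" using v(2)
    by (simp add: matrix_vector_mult_diff_rdistrib)
  then have d1: "det (mat z - Fc) = 0" using sing_det v(1) by blast
  have "- transpose Fc - mat z = transpose (mat (-z) - Fc)"
    by (simp add: transpose_diff) (simp add: mat_def vec_eq_iff)
  then have "det (transpose (mat (-z) - Fc)) = 0" using sing_det w by metis
  then have d2: "det (mat (-z) - Fc) = 0" by (simp add: det_transpose)
  from h d1 d2 have "Re z < 0" "Re (-z) < 0" unfolding hurwitz_def Fc_def by blast+
  then show False by simp
qed

lemma lop_linear: "linear (lop F)"
  by (rule linearI) (simp_all add: lop_def matrix_add_ldistrib matrix_add_rdistrib'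
      matrix_scalar_ac scalar_matrix_assoc[symmetric] algebra_simps)

lemma hurwitz_inj: "hurwitz F \<Longrightarrow> inj (lop F)"
  using hurwitz_lop0 lop_linear linear_inj_iff_eq_0 by blast

lemma hurwitz_transpose: "hurwitz F \<Longrightarrow> hurwitz (transpose F)"
proof -
  assume h: "hurwitz F"
  have "mat z - map_matrix complex_of_real (transpose F) = transpose (mat z - map_matrix of_real F)" for z
    by (simp add: transpose_diff) (simp add: transpose_def vec_eq_iff)
  then show ?thesis using h unfolding hurwitz_def by (simp add: det_transpose)
qed


lemma trace_transpose: "trace (transpose A) = trace A"
  by (simp add: trace_def transpose_def)

lemma transpose_zero[simp]: "transpose 0 = 0"
  by (simp add: transpose_def vec_eq_iff)

lemma inner_tr: "inner (X::real^'a^'b) Y = trace (transpose X ** Y)"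
  by (simp add: inner_vec_def trace_def transpose_def matrix_matrix_mult_def)
     (rule sum.swap)

lemma inner_mul_left: "inner (A ** X) (Y::real^'a^'b) = inner X (transpose A ** Y)"
  by (simp add: inner_tr matrix_transpose_mul matrix_mul_assoc)

lemma inner_mul_right: "inner (X ** A) (Y::real^'a^'b) = inner X (Y ** transpose A)"
proof -
  have "inner (X ** A) Y = trace ((transpose A ** transpose X) ** Y)"
    by (simp add: inner_tr matrix_transpose_mul)
  also have "\<dots> = trace (transpose A ** (transpose X ** Y))" by (simp add: matrix_mul_assoc)
  also have "\<dots> = trace ((transpose X ** Y) ** transpose A)" by (rule trace_mul_sym)
  also have "\<dots> = inner X (Y ** transpose A)" by (simp add: inner_tr matrix_mul_assoc)
  finally show ?thesis .
qed

lemma inner_transpose: "inner (transpose X) (transpose (Y::real^'a^'b)) = inner X Y"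
  by (simp add: inner_vec_def transpose_def) (rule sum.swap)

lemma inner_sym_transpose: "transpose M = M \<Longrightarrow> inner M (transpose Y) = inner M (Y::real^'a^'a)"
  by (metis inner_transpose)

lemma inner_symp: "transpose M = M \<Longrightarrow> inner M (symp Y) = inner M (Y::real^'a^'a)"
  by (simp add: symp_def inner_add_right inner_sym_transpose)

lemma lop_surj: "inj (lop F) \<Longrightarrow> surj (lop F)"
  using linear_injective_imp_surjective lop_linear by blast

lemma lyap_unique:
  assumes "inj (lop F)" "F ** N + N ** transpose F + M = 0"
  shows "lyap F M = N"
  unfolding lyap_def
proof (rule the_equality)
  show "F ** N + N ** transpose F + M = 0" by fact
  fix N' assume "F ** N' + N' ** transpose F + M = 0"
  then have "lop F N' = - M" unfolding lop_def by (simp add: eq_neg_iff_add_eq_0)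
  moreover have "lop F N = - M" using assms(2) unfolding lop_def by (simp add: eq_neg_iff_add_eq_0)
  ultimately have "lop F N' = lop F N" by simp
  then show "N' = N" using assms(1) by (simp add: inj_eq)
qed

lemma lyap_eq:
  assumes "inj (lop F)"
  shows "F ** lyap F M + lyap F M ** transpose F + M = 0"
proof -
  obtain N where "lop F N = - M" using lop_surj[OF assms] by (metis surjD)
  then have N: "F ** N + N ** transpose F + M = 0" unfolding lop_def by simp
  show ?thesis using lyap_unique[OF assms N] N by simp
qed

lemma lyap_add:
  assumes "inj (lop F)"
  shows "lyap F (M1 + M2) = lyap F M1 + lyap F M2"
proof (rule lyap_unique[OF assms])
  have "F ** (lyap F M1 + lyap F M2) + (lyap F M1 + lyap F M2) ** transpose F + (M1 + M2)
    = (F ** lyap F M1 + lyap F M1 ** transpose F + M1) + (F ** lyap F M2 + lyap F M2 ** transpose F + M2)"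
    by (simp add: matrix_add_ldistrib matrix_add_rdistrib' algebra_simps)
  also have "\<dots> = 0" using lyap_eq[OF assms, of M1] lyap_eq[OF assms, of M2] by simp
  finally show "F ** (lyap F M1 + lyap F M2) + (lyap F M1 + lyap F M2) ** transpose F + (M1 + M2) = 0" .
qed

lemma lyap_scale:
  assumes "inj (lop F)"
  shows "lyap F (c *\<^sub>R M) = c *\<^sub>R lyap F M"
proof (rule lyap_unique[OF assms])
  have "c *\<^sub>R (F ** lyap F M + lyap F M ** transpose F + M) = 0"
    using lyap_eq[OF assms, of M] by simp
  then show "F ** (c *\<^sub>R lyap F M) + c *\<^sub>R lyap F M ** transpose F + c *\<^sub>R M = 0"
    by (simp add: matrix_scalar_ac scalar_matrix_assoc[symmetric] algebra_simps)
qed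

lemma lyap_linear: "inj (lop F) \<Longrightarrow> linear (lyap F)"
  by (rule linearI) (simp_all add: lyap_add lyap_scale)

lemma lyap_sym:
  assumes "inj (lop F)" "transpose M = M"
  shows "transpose (lyap F M) = lyap F M"
proof -
  have "transpose (F ** lyap F M + lyap F M ** transpose F + M) = 0"
    using lyap_eq[OF assms(1), of M] by simp
  then have "F ** transpose (lyap F M) + transpose (lyap F M) ** transpose F + M = 0"
    using assms(2) by (simp add: transpose_add matrix_transpose_mul algebra_simps)
  from lyap_unique[OF assms(1) this] show ?thesis by simp
qed

lemma lyap_dual:
  assumes "inj (lop F)" "inj (lop (transpose F))"
  shows "inner U (lyap F V) = inner (lyap (transpose F) U) V"
proof -
  define N where "N = lyap F V"
  define K where "K = lyap (transpose F) U"
  have eN: "V = - (F ** N + N ** transpose F)" using lyap_eq[OF assms(1), of V]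
    unfolding N_def add_eq_0_iff .
  have eK: "U = - (transpose F ** K + K ** F)" using lyap_eq[OF assms(2), of U]
    unfolding K_def add_eq_0_iff by simp
  have "inner U N = - (inner (transpose F ** K) N + inner (K ** F) N)"
    by (simp add: eK inner_add_left inner_diff_left inner_minus_left)
  also have "\<dots> = - (inner K (F ** N) + inner K (N ** transpose F))"
    by (simp only: inner_mul_left[of "transpose F" K N] inner_mul_right[of K F N] transpose_transpose)
  also have "\<dots> = inner K V" by (simp add: eN inner_add_right inner_diff_right inner_minus_right)
  finally show ?thesis unfolding N_def K_def .
qed


lemma h1: "(a::'a::ab_group_add) + b + c = 0 \<Longrightarrow> a = - b - c"
  by (metis add.assoc add_eq_0_iff2 minus_add_distrib diff_conv_add_uminus)

lemma abs_deriv: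
  fixes L0 :: "'y::euclidean_space \<Rightarrow> 'y" and Bi :: "'x::euclidean_space \<Rightarrow> 'y \<Rightarrow> 'y"
  assumes lin: "linear L0" and inj: "inj L0" and bb: "bounded_bilinear Bi"
    and fdef: "\<And>x. f x = (THE y. L0 y + Bi x y + w = 0)"
  shows "(f has_derivative (\<lambda>h. THE y. L0 y + Bi h (f 0) = 0)) (at 0)"
proof -
  obtain Li where Li: "linear Li" "Li \<circ> L0 = id"
    using linear_injective_left_inverse[OF lin inj] by blast
  have LiL: "Li (L0 y) = y" for y using Li(2) by (metis comp_apply id_apply)
  obtain B where B: "B > 0" "\<And>y. norm (Li y) \<le> B * norm y"
    using linear_bounded_pos[OF Li(1)] by blast
  obtain c where c: "c > 0" "\<And>a b. norm (Bi a b) \<le> norm a * norm b * c"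
    using bounded_bilinear.pos_bounded[OF bb] by blast
  define K where "K = B * c"
  have K: "K > 0" using B c by (simp add: K_def)
  have bound: "norm (Li (Bi x y)) \<le> K * norm x * norm y" for x y
  proof -
    have "norm (Li (Bi x y)) \<le> B * (norm x * norm y * c)"
      using B(2)[of "Bi x y"] c(2)[of x y] B(1) by (meson mult_left_mono order_trans less_imp_le)
    then show ?thesis by (simp add: K_def algebra_simps)
  qed
  have L0_lin: "L0 (a - b) = L0 a - L0 b" "L0 (- a) = - L0 a" for a b
    using lin by (simp_all add: linear_diff linear_neg)
  have Li_lin: "Li (a - b) = Li a - Li b" "Li (- a) = - Li a" for a b
    using Li(1) by (simp_all add: linear_diff linear_neg)
  have Bi0: "Bi 0 y = 0" for y by (rule bounded_bilinear.zero_left[OF bb])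
  have solv: "L0 (f x) + Bi x (f x) + w = 0" if sx: "K * norm x \<le> 1/2" for x
  proof -
    let ?T = "\<lambda>y. L0 y + Bi x y"
    have linT: "linear ?T"
      using lin bounded_bilinear.bounded_linear_right[OF bb, of x]
      by (simp add: linear_add bounded_linear.linear linear_compose_add)
    have "y = 0" if "?T y = 0" for y
    proof -
      have "L0 y = - Bi x y" using that by (simp add: eq_neg_iff_add_eq_0)
      have "y = Li (L0 y)" by (simp add: LiL)
      also have "\<dots> = - Li (Bi x y)" by (simp add: \<open>L0 y = - Bi x y\<close> Li_lin)
      finally have "y = - Li (Bi x y)" .
      then have "norm y \<le> K * norm x * norm y" using bound[of x y] by (metis norm_minus_cancel)
      also have "\<dots> \<le> 1/2 * norm y" using mult_right_mono[OF sx, of "norm y"] by simp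
      finally show "y = 0" by simp
    qed
    then have "inj ?T" using linT linear_inj_iff_eq_0 by blast
    then have "surj ?T" using linT linear_injective_imp_surjective by blast
    from surjD[OF this, of "- w"] obtain y where y: "?T y = - w" by (auto simp: eq_commute)
    have ex: "L0 y + Bi x y + w = 0" using y by simp
    have "(THE y. L0 y + Bi x y + w = 0) = y"
    proof (rule the_equality)
      show "L0 y + Bi x y + w = 0" by (rule ex)
      fix y' assume "L0 y' + Bi x y' + w = 0"
      then have "?T y' = - w" by (simp add: add_eq_0_iff2)
      then have "?T y' = ?T y" using y by simp
      with \<open>inj ?T\<close> show "y' = y" unfolding inj_def by blast
    qed
    then show ?thesis using ex fdef by simp
  qed
  define y0 where "y0 = f 0"
  have y0: "L0 y0 + w = 0" using solv[of 0] Bi0 by (simp add: y0_def)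
  define D where "D = (\<lambda>h. - Li (Bi h y0))"
  have Deq: "(\<lambda>h. THE y. L0 y + Bi h (f 0) = 0) = D"
  proof
    fix h
    show "(THE y. L0 y + Bi h (f 0) = 0) = D h"
    proof (rule the_equality)
      have "L0 (Li (Bi h y0)) = Bi h y0"
      proof -
        have "surj L0" using lin inj linear_injective_imp_surjective by blast
        from surjD[OF this, of "Bi h y0"] obtain z where "Bi h y0 = L0 z" by blast
        then show ?thesis by (simp add: LiL)
      qed
      then show "L0 (D h) + Bi h (f 0) = 0" by (simp add: D_def L0_lin y0_def)
      fix y assume "L0 y + Bi h (f 0) = 0"
      then have "L0 y = L0 (D h)" using \<open>L0 (Li (Bi h y0)) = Bi h y0\<close>
        by (simp add: D_def L0_lin y0_def eq_neg_iff_add_eq_0)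
      then show "y = D h" using inj by (simp add: inj_eq)
    qed
  qed
  have blD: "bounded_linear D"
  proof -
    have "bounded_linear Li" using Li(1) linear_conv_bounded_linear by blast
    then have "bounded_linear (\<lambda>h. Li (Bi h y0))"
      using bounded_bilinear.bounded_linear_left[OF bb, of y0] bounded_linear_compose by blast
    then show ?thesis unfolding D_def by (rule bounded_linear_minus)
  qed
  have rem: "norm (f x - y0 - D x) \<le> 2 * K^2 * norm y0 * norm x * norm x"
    if sx: "K * norm x \<le> 1/2" for x
  proof -
    define d where "d = f x - y0"
    have a1: "L0 (f x) = - Bi x (f x) - w" using solv[OF sx] by (rule h1)
    have a2: "L0 y0 = - w" using y0 by (simp add: eq_neg_iff_add_eq_0)
    have "L0 d = - Bi x (f x)" unfolding d_def L0_lin a1 a2 by simp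
    have "d = Li (L0 d)" by (simp add: LiL)
    also have "\<dots> = - Li (Bi x (f x))" by (simp add: \<open>L0 d = - Bi x (f x)\<close> Li_lin)
    finally have dd: "d = - Li (Bi x (f x))" .
    have fx: "f x = y0 + d" by (simp add: d_def)
    have "norm d \<le> K * norm x * norm (f x)" using dd bound[of x "f x"] by (metis norm_minus_cancel)
    also have "\<dots> \<le> K * norm x * (norm y0 + norm d)"
      using fx norm_triangle_ineq[of y0 d] K by (simp add: mult_left_mono)
    also have "\<dots> = K * norm x * norm y0 + K * norm x * norm d" by (simp add: algebra_simps)
    also have "\<dots> \<le> K * norm x * norm y0 + 1/2 * norm d" using mult_right_mono[OF sx, of "norm d"] by simp
    finally have nd: "norm d \<le> 2 * K * norm x * norm y0" by simp
    have "f x - y0 - D x = - Li (Bi x (f x)) + Li (Bi x y0)"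
      using dd by (simp add: D_def d_def)
    also have "\<dots> = - (Li (Bi x (f x) - Bi x y0))" by (simp add: Li_lin)
    also have "\<dots> = - Li (Bi x d)" by (simp add: d_def bounded_bilinear.diff_right[OF bb])
    finally have "f x - y0 - D x = - Li (Bi x d)" .
    then have "norm (f x - y0 - D x) \<le> K * norm x * norm d" using bound[of x d] by simp
    also have "\<dots> \<le> K * norm x * (2 * K * norm x * norm y0)"
      using nd K by (simp add: mult_left_mono)
    finally show ?thesis by (simp add: power2_eq_square algebra_simps)
  qed
  show ?thesis
    unfolding Deq has_derivative_at_alt
  proof (intro conjI allI impI blD)
    fix e :: real assume e: "e > 0"
    define d where "d = min (1/(2*K)) (e / (2 * K^2 * (norm y0 + 1)))"
    have "norm y0 + 1 > 0" by (simp add: add_nonneg_pos)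
    then have "2 * K^2 * (norm y0 + 1) > 0" using K by simp
    then have d: "d > 0" using e K by (simp add: d_def)
    show "\<exists>d>0. \<forall>y. norm (y - 0) < d \<longrightarrow> norm (f y - f 0 - D (y - 0)) \<le> e * norm (y - 0)"
    proof (intro exI[of _ d] conjI allI impI d)
      fix x :: 'x assume "norm (x - 0) < d"
      then have xd: "norm x < d" by simp
      have sx: "K * norm x \<le> 1/2"
      proof -
        have "norm x \<le> 1/(2*K)" using xd by (simp add: d_def)
        then show ?thesis using K by (simp add: field_simps)
      qed
      have xe: "2 * K^2 * (norm y0 + 1) * norm x \<le> e"
      proof -
        have "norm x \<le> e / (2 * K^2 * (norm y0 + 1))" using xd by (simp add: d_def)
        moreover have "norm y0 + 1 > 0" by (simp add: add_nonneg_pos)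
        then have "2 * K^2 * (norm y0 + 1) > 0" using K by simp
        ultimately show ?thesis by (simp add: field_simps)
      qed
      have "norm (f x - y0 - D x) \<le> 2 * K^2 * norm y0 * norm x * norm x" by (rule rem[OF sx])
      also have "\<dots> \<le> (2 * K^2 * (norm y0 + 1) * norm x) * norm x"
        using K by (simp add: mult_right_mono mult_left_mono)
      also have "\<dots> \<le> e * norm x" using xe by (simp add: mult_right_mono)
      finally show "norm (f x - f 0 - D (x - 0)) \<le> e * norm (x - 0)" by (simp add: y0_def)
    qed
  qed
qed


lemma lyap_deriv0:
  fixes A0 :: "real^'k^'k" and K :: "'x::euclidean_space \<Rightarrow> real^'k^'k"
  assumes K: "linear K" and inj: "inj (lop A0)"
  shows "((\<lambda>x. lyap (A0 + K x) W) has_derivative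
          (\<lambda>h. lyap A0 (K h ** lyap A0 W + lyap A0 W ** transpose (K h)))) (at 0)"
proof -
  define Bi where "Bi = (\<lambda>x N. K x ** N + N ** transpose (K x :: real^'k^'k))"
  have "bilinear Bi"
    unfolding bilinear_def
  proof (intro conjI allI)
    fix x show "linear (Bi x)"
      by (rule linearI) (simp_all add: Bi_def matrix_add_ldistrib matrix_add_rdistrib'
          matrix_scalar_ac scalar_matrix_assoc[symmetric] algebra_simps)
  next
    fix N show "linear (\<lambda>x. Bi x N)"
      by (rule linearI) (simp_all add: Bi_def linear_add[OF K] linear_scale[OF K] transpose_add
          transpose_scalar matrix_add_ldistrib matrix_add_rdistrib'
          matrix_scalar_ac scalar_matrix_assoc[symmetric] algebra_simps)
  qed
  then have bb: "bounded_bilinear Bi" using bilinear_conv_bounded_bilinear by blast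
  have fdef: "lyap (A0 + K x) W = (THE y. lop A0 y + Bi x y + W = 0)" for x
  proof -
    have "(\<lambda>N. (A0 + K x) ** N + N ** transpose (A0 + K x) + W = 0) = (\<lambda>y. lop A0 y + Bi x y + W = 0)"
      by (simp add: lop_def Bi_def matrix_add_rdistrib' matrix_add_ldistrib transpose_add algebra_simps)
    then show ?thesis unfolding lyap_def by simp
  qed
  have d: "((\<lambda>x. lyap (A0 + K x) W) has_derivative
     (\<lambda>h. THE y. lop A0 y + Bi h (lyap (A0 + K 0) W) = 0)) (at 0)"
    by (rule abs_deriv[OF lop_linear inj bb fdef])
  have K0: "K 0 = 0" using K by (simp add: linear_0)
  have "(\<lambda>h. THE y. lop A0 y + Bi h (lyap (A0 + K 0) W) = 0)
      = (\<lambda>h. lyap A0 (K h ** lyap A0 W + lyap A0 W ** transpose (K h)))"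
    by (simp add: K0 lyap_def lop_def Bi_def add.assoc)
  with d show ?thesis by simp
qed

lemma lyap_deriv_at:
  fixes A0 :: "real^'k^'k" and K :: "'x::euclidean_space \<Rightarrow> real^'k^'k"
  assumes K: "linear K" and inj: "inj (lop A0)"
  shows "((\<lambda>x. lyap (A0 + K (x - a)) W) has_derivative
          (\<lambda>h. lyap A0 (K h ** lyap A0 W + lyap A0 W ** transpose (K h)))) (at a)"
proof -
  have d1: "((\<lambda>x. x - a) has_derivative (\<lambda>h. h)) (at a)"
    by (auto intro!: derivative_eq_intros)
  have d2: "((\<lambda>x. lyap (A0 + K x) W) has_derivative
          (\<lambda>h. lyap A0 (K h ** lyap A0 W + lyap A0 W ** transpose (K h)))) (at ((\<lambda>x. x - a) a))"
    using lyap_deriv0[OF K inj] by simp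
  from has_derivative_compose[OF d1 d2] show ?thesis by simp
qed

lemma calJ_blk: "calJ M = blk 0 0 0 (canonJ ** M)"
  by (auto simp: vec_eq_iff blk_def calJ_def vstack_def hstack_def matrix_matrix_mult_def mat_def
      if_distrib sum.delta cong: if_cong split: sum.split)

lemma blk_add22: "blk X11 X12 X21 (X22 + Y) = blk X11 X12 X21 X22 + blk 0 0 0 Y"
  by (simp add: blk_def vec_eq_iff split: sum.split)

lemma ctrl_a_add: "ctrl_a D b (R + M) = ctrl_a D b R + canonJ ** M"
  by (simp add: ctrl_a_def matrix_add_ldistrib algebra_simps)

lemma clA_shift: "clA A B2 C D b R' = clA A B2 C D b R + calJ (R' - R)"
proof -
  have "clA A B2 C D b (R + (R' - R)) = clA A B2 C D b R + calJ (R' - R)"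
    by (simp only: clA_def ctrl_a_add blk_add22 calJ_blk)
  then show ?thesis by simp
qed

lemma calJ_linear: "linear calJ"
  by (rule linearI) (simp_all add: calJ_def matrix_add_ldistrib matrix_add_rdistrib'
      matrix_scalar_ac scalar_matrix_assoc[symmetric])

lemma symp_sym: "transpose (symp X) = symp X"
  by (simp add: symp_def transpose_add transpose_scalar add.commute)

lemma calJ_adj_prop:
  fixes X :: "real^('n::{finite,linorder}+'n)^('n+'n)"
  shows "calJ_adj X \<in> symm_mats \<and> (\<forall>M\<in>symm_mats. inner (calJ M) X = inner M (calJ_adj X))"
  unfolding calJ_adj_def
proof (rule theI')
  define E1 where "E1 = vstack (0::real^('n::{finite,linorder})^('n::{finite,linorder})) canonJ"
  define E2 where "E2 = hstack (0::real^('n::{finite,linorder})^('n::{finite,linorder})) (mat 1)"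
  define Y0 where "Y0 = symp (transpose E1 ** X ** transpose E2)"
  have cJ: "calJ M = E1 ** M ** E2" for M by (simp add: calJ_def E1_def E2_def)
  have ex: "Y0 \<in> symm_mats \<and> (\<forall>M\<in>symm_mats. inner (calJ M) X = inner M Y0)"
  proof (intro conjI ballI)
    show "Y0 \<in> symm_mats" by (simp add: symm_mats_def Y0_def symp_sym)
    fix M :: "real^('n::{finite,linorder})^('n::{finite,linorder})" assume "M \<in> symm_mats"
    then have Ms: "transpose M = M" by (simp add: symm_mats_def)
    have "inner (calJ M) X = inner (E1 ** M) (X ** transpose E2)" by (simp add: cJ inner_mul_right)
    also have "\<dots> = inner M (transpose E1 ** X ** transpose E2)"
      by (simp add: inner_mul_left matrix_mul_assoc)
    also have "\<dots> = inner M Y0" by (simp add: Y0_def inner_symp[OF Ms])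
    finally show "inner (calJ M) X = inner M Y0" .
  qed
  show "\<exists>!Y. Y \<in> symm_mats \<and> (\<forall>M\<in>symm_mats. inner (calJ M) X = inner M Y)"
  proof (rule ex1I[of _ Y0])
    show "Y0 \<in> symm_mats \<and> (\<forall>M\<in>symm_mats. inner (calJ M) X = inner M Y0)" by (rule ex)
    fix Y assume Y: "Y \<in> symm_mats \<and> (\<forall>M\<in>symm_mats. inner (calJ M) X = inner M Y)"
    have "Y - Y0 \<in> symm_mats" using Y ex by (simp add: symm_mats_def transpose_diff)
    then have "inner (Y - Y0) Y = inner (Y - Y0) Y0" using Y ex by metis
    then have "inner (Y - Y0) (Y - Y0) = 0" by (simp add: inner_diff_right)
    then show "Y = Y0" by simp
  qed
qed

lemma two_symp: "X + transpose X = 2 *\<^sub>R symp X"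
  by (simp add: symp_def)


lemma bl_mul_left: "bounded_linear (\<lambda>Y. (X::real^'a^'b) ** (Y::real^'c^'a))"
  unfolding linear_conv_bounded_linear[symmetric]
  by (rule linearI) (simp_all add: matrix_add_ldistrib matrix_scalar_ac scalar_matrix_assoc[symmetric])

lemma calJ_adj_inner: "M \<in> symm_mats \<Longrightarrow> inner M (calJ_adj X) = inner (calJ M) X"
  using calJ_adj_prop[of X] by simp

lemma calJ_adj_sym: "transpose (calJ_adj X) = calJ_adj X"
  using calJ_adj_prop[of X] by (simp add: symm_mats_def)

lemma cross_term:
  fixes F Q P :: "real^'m^'m"
  assumes iF: "inj (lop F)" and iT: "inj (lop (transpose F))"
    and Qs: "transpose Q = Q" and Ps: "transpose P = P"
  shows "inner X1 (Q ** lyap F (symp (X2 ** P))) = inner X2 (lyap (transpose F) (symp (Q ** X1)) ** P)"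
proof -
  define Nf where "Nf = lyap F (symp (X2 ** P))"
  define Nb where "Nb = lyap (transpose F) (symp (Q ** X1))"
  have Nfs: "transpose Nf = Nf" unfolding Nf_def by (rule lyap_sym[OF iF symp_sym])
  have Nbs: "transpose Nb = Nb" unfolding Nb_def by (rule lyap_sym[OF iT symp_sym])
  have "inner X1 (Q ** Nf) = inner (transpose Q ** X1) Nf"
    by (simp add: inner_mul_left)
  also have "\<dots> = inner Nf (Q ** X1)" by (simp add: Qs inner_commute)
  also have "\<dots> = inner Nf (symp (Q ** X1))" by (simp add: inner_symp[OF Nfs])
  also have "\<dots> = inner (symp (Q ** X1)) Nf" by (simp add: inner_commute)
  also have "\<dots> = inner Nb (symp (X2 ** P))"
    unfolding Nf_def Nb_def by (rule lyap_dual[OF iF iT])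
  also have "\<dots> = inner Nb (X2 ** P)" by (simp add: inner_symp[OF Nbs])
  also have "\<dots> = inner X2 (Nb ** transpose P)" by (subst inner_commute) (rule inner_mul_right)
  finally show ?thesis by (simp add: Ps Nf_def Nb_def)
qed

theorem lemma5:
  fixes A :: "real^('n::{finite,linorder})^('n::{finite,linorder})"
    and B1 :: "real^('m1::{finite,linorder})^('n::{finite,linorder})"
    and B2 :: "real^('m2::{finite,linorder})^('n::{finite,linorder})"
    and C :: "real^('n::{finite,linorder})^('p::finite)"
    and D :: "real^('m1::{finite,linorder})^('p::finite)"
    and C0 :: "real^('n::{finite,linorder})^('p0::finite)"
    and D0 :: "real^('m2::{finite,linorder})^('p0::finite)"
    and b :: "real^(('m2::{finite,linorder}) + ('p::finite))^('n::{finite,linorder})"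
  assumes "even CARD(('n::{finite,linorder}))" and "even CARD(('m1::{finite,linorder}))" and "even CARD(('m2::{finite,linorder}))"
  shows "\<exists>DE. (\<forall>R\<in>symm_mats. hurwitz (clA A B2 C D b R) \<longrightarrow>
              (costE A B1 B2 C D C0 D0 b has_derivative DE R) (at R within symm_mats))
          \<and> (\<forall>R\<in>symm_mats. hurwitz (clA A B2 C D b R) \<longrightarrow>
              (\<forall>M1\<in>symm_mats.
                 ((\<lambda>R'. DE R' M1) has_derivative
                    (\<lambda>M2. inner M1 (hessE A B1 B2 C D C0 D0 b R M2))) (at R within symm_mats)))
          \<and> (\<forall>R\<in>symm_mats. hurwitz (clA A B2 C D b R) \<longrightarrow>
              (\<forall>M1\<in>symm_mats. \<forall>M2\<in>symm_mats.
                 hessE A B1 B2 C D C0 D0 b R M1 \<in> symm_mats \<and>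
                 inner M1 (hessE A B1 B2 C D C0 D0 b R M2) = inner (hessE A B1 B2 C D C0 D0 b R M1) M2))"
proof -
  define Acl where "Acl = (\<lambda>R. clA A B2 C D b R)"
  define W where "W = clB B1 B2 D b ** transpose (clB B1 B2 D b)"
  define V where "V = transpose (clC C0 D0 b) ** clC C0 D0 b"
  define PP where "PP = gramP A B1 B2 C D b"
  define QQ where "QQ = gramQ A B2 C D C0 D0 b"
  have PPe: "PP R = lyap (Acl R) W" for R by (simp add: PP_def gramP_def Acl_def W_def)
  have QQe: "QQ R = lyap (transpose (Acl R)) V" for R by (simp add: QQ_def gramQ_def Acl_def V_def)
  have Ws: "transpose W = W" by (simp add: W_def matrix_transpose_mul)
  have Vs: "transpose V = V" by (simp add: V_def matrix_transpose_mul)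
  have shift: "Acl R' = Acl R + calJ (R' - R)" for R R' unfolding Acl_def by (rule clA_shift)
  have costE_eq: "costE A B1 B2 C D C0 D0 b R = inner V (PP R)" for R
  proof -
    let ?C = "clC C0 D0 b"
    have "costE A B1 B2 C D C0 D0 b R = trace ((?C ** PP R) ** transpose ?C)"
      by (simp add: costE_def PP_def)
    also have "\<dots> = trace (transpose ?C ** (?C ** PP R))" by (rule trace_mul_sym)
    also have "\<dots> = trace (V ** PP R)" by (simp add: V_def matrix_mul_assoc)
    also have "\<dots> = trace (transpose V ** PP R)" by (simp only: Vs)
    also have "\<dots> = inner V (PP R)" by (simp add: inner_tr)
    finally show ?thesis .
  qed
  have hessE_eq: "hessE A B1 B2 C D C0 D0 b R M =
     4 *\<^sub>R calJ_adj (QQ R ** lyap (Acl R) (symp (calJ M ** PP R))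
        + lyap (transpose (Acl R)) (symp (QQ R ** calJ M)) ** PP R)" for R M
    by (simp add: hessE_def Let_def PP_def QQ_def Acl_def)
  define DE where "DE = (\<lambda>R M. 2 * inner (QQ R) (calJ M ** PP R))"
  have iP: "inj (lop (Acl R))" if "hurwitz (Acl R)" for R using that by (rule hurwitz_inj)
  have iQ: "inj (lop (transpose (Acl R)))" if "hurwitz (Acl R)" for R
    using that by (intro hurwitz_inj hurwitz_transpose)
  have Ps: "transpose (PP R) = PP R" if "hurwitz (Acl R)" for R
    unfolding PPe using lyap_sym[OF iP[OF that] Ws] .
  have Qs: "transpose (QQ R) = QQ R" if "hurwitz (Acl R)" for R
    unfolding QQe using lyap_sym[OF iQ[OF that] Vs] .
  have dP: "(PP has_derivative (\<lambda>h. lyap (Acl R) (calJ h ** PP R + PP R ** transpose (calJ h)))) (at R)"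
    if "hurwitz (Acl R)" for R
  proof -
    have "PP = (\<lambda>x. lyap (Acl R + calJ (x - R)) W)" using shift by (auto simp: PPe)
    moreover have "PP R = lyap (Acl R) W" by (simp add: PPe)
    ultimately show ?thesis using lyap_deriv_at[OF calJ_linear iP[OF that], of R W] by simp
  qed
  have dQ: "(QQ has_derivative (\<lambda>h. lyap (transpose (Acl R))
        (transpose (calJ h) ** QQ R + QQ R ** calJ h))) (at R)"
    if "hurwitz (Acl R)" for R
  proof -
    have lK: "linear (\<lambda>x. transpose (calJ x))"
      using calJ_linear by (rule linear_compose[of calJ transpose, unfolded o_def])
        (rule linearI, simp_all add: transpose_add transpose_scalar)
    have "QQ = (\<lambda>x. lyap (transpose (Acl R) + transpose (calJ (x - R))) V)"
    proof (rule ext)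
      fix x
      have "transpose (Acl x) = transpose (Acl R) + transpose (calJ (x - R))"
        using shift[of x R] by (simp add: transpose_add)
      then show "QQ x = lyap (transpose (Acl R) + transpose (calJ (x - R))) V" by (simp add: QQe)
    qed
    moreover have "QQ R = lyap (transpose (Acl R)) V" by (simp add: QQe)
    ultimately show ?thesis using lyap_deriv_at[OF lK iQ[OF that], of R V] by simp
  qed
  have c1: "(costE A B1 B2 C D C0 D0 b has_derivative DE R) (at R)"
    if h: "hurwitz (Acl R)" for R
  proof -
    have e: "costE A B1 B2 C D C0 D0 b = (\<lambda>R. inner V (PP R))" using costE_eq by auto
    have d: "((\<lambda>R. inner V (PP R)) has_derivative
        (\<lambda>h. inner V (lyap (Acl R) (calJ h ** PP R + PP R ** transpose (calJ h))))) (at R)"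
      by (rule bounded_linear.has_derivative[OF bounded_linear_inner_right dP[OF h]])
    have "inner V (lyap (Acl R) (calJ h ** PP R + PP R ** transpose (calJ h))) = DE R h" for h
    proof -
      have "inner V (lyap (Acl R) (calJ h ** PP R + PP R ** transpose (calJ h)))
          = inner (QQ R) (calJ h ** PP R + PP R ** transpose (calJ h))"
        by (simp add: lyap_dual[OF iP[OF h] iQ[OF h]] QQe)
      also have "\<dots> = inner (QQ R) (calJ h ** PP R) + inner (QQ R) (transpose (calJ h ** PP R))"
        by (simp add: inner_add_right matrix_transpose_mul Ps[OF h])
      also have "\<dots> = DE R h"
        by (simp add: DE_def inner_sym_transpose[OF Qs[OF h]])
      finally show ?thesis .
    qed
    with d e show ?thesis by simp
  qed
  have c2: "((\<lambda>R'. DE R' M1) has_derivative (\<lambda>M2. inner M1 (hessE A B1 B2 C D C0 D0 b R M2))) (at R)"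
    if h: "hurwitz (Acl R)" and M1: "M1 \<in> symm_mats" for R M1
  proof -
    define X1 where "X1 = calJ M1"
    define P where "P = PP R"
    define Q where "Q = QQ R"
    define F where "F = Acl R"
    have dXP: "((\<lambda>R'. X1 ** PP R') has_derivative
       (\<lambda>h. X1 ** lyap F (calJ h ** P + P ** transpose (calJ h)))) (at R)"
      unfolding F_def P_def by (rule bounded_linear.has_derivative[OF bl_mul_left dP[OF h]])
    have d: "((\<lambda>R'. 2 * inner (QQ R') (X1 ** PP R')) has_derivative
       (\<lambda>h. 2 * (inner Q (X1 ** lyap F (calJ h ** P + P ** transpose (calJ h)))
           + inner (lyap (transpose F) (transpose (calJ h) ** Q + Q ** calJ h)) (X1 ** P)))) (at R)"
      unfolding F_def P_def Q_def
      by (rule has_derivative_mult_right[OF has_derivative_inner[OF dQ[OF h] dXP[unfolded F_def P_def]]])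
    have eqf: "(\<lambda>R'. DE R' M1) = (\<lambda>R'. 2 * inner (QQ R') (X1 ** PP R'))" by (simp add: DE_def X1_def)
    have iF: "inj (lop F)" and iT: "inj (lop (transpose F))" using iP[OF h] iQ[OF h] by (simp_all add: F_def)
    have Pss: "transpose P = P" using Ps[OF h] by (simp add: P_def)
    have Qss: "transpose Q = Q" using Qs[OF h] by (simp add: Q_def)
    have M1s: "transpose M1 = M1" using M1 by (simp add: symm_mats_def)
    have "2 * (inner Q (X1 ** lyap F (calJ h ** P + P ** transpose (calJ h)))
           + inner (lyap (transpose F) (transpose (calJ h) ** Q + Q ** calJ h)) (X1 ** P))
        = inner M1 (hessE A B1 B2 C D C0 D0 b R h)" for h
    proof -
      define X2 where "X2 = calJ h"
      define Nf where "Nf = lyap F (symp (X2 ** P))"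
      define Nb where "Nb = lyap (transpose F) (symp (Q ** X2))"
      have Nfs: "transpose Nf = Nf" unfolding Nf_def by (rule lyap_sym[OF iF symp_sym])
      have e1: "X2 ** P + P ** transpose X2 = 2 *\<^sub>R symp (X2 ** P)"
        by (simp add: two_symp[symmetric] matrix_transpose_mul Pss)
      have e2: "transpose X2 ** Q + Q ** X2 = 2 *\<^sub>R symp (Q ** X2)"
        by (simp add: two_symp[symmetric] matrix_transpose_mul Qss add.commute)
      have l1: "lyap F (X2 ** P + P ** transpose X2) = 2 *\<^sub>R Nf"
        by (simp add: e1 Nf_def lyap_scale[OF iF])
      have l2: "lyap (transpose F) (transpose X2 ** Q + Q ** X2) = 2 *\<^sub>R Nb"
        by (simp add: e2 Nb_def lyap_scale[OF iT])
      have t1: "inner Q (X1 ** Nf) = inner X1 (Q ** Nf)"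
        by (simp add: inner_commute[of Q] inner_mul_right Nfs)
      have t2: "inner Nb (X1 ** P) = inner X1 (Nb ** P)"
        by (simp add: inner_commute[of Nb] inner_mul_right Pss)
      have "inner M1 (hessE A B1 B2 C D C0 D0 b R h) = 4 * inner X1 (Q ** Nf + Nb ** P)"
        using M1
        by (simp add: calJ_adj_inner hessE_eq X1_def Nf_def Nb_def X2_def P_def Q_def F_def)
      moreover have "2 * (inner Q (X1 ** lyap F (X2 ** P + P ** transpose X2))
           + inner (lyap (transpose F) (transpose X2 ** Q + Q ** X2)) (X1 ** P))
         = 2 * (inner Q (X1 ** (2 *\<^sub>R Nf)) + inner (2 *\<^sub>R Nb) (X1 ** P))"
        by (simp only: l1 l2)
      moreover have "X1 ** (2 *\<^sub>R Nf) = 2 *\<^sub>R (X1 ** Nf)"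
        by (simp add: matrix_scalar_ac scalar_matrix_assoc[symmetric])
      ultimately show ?thesis
        unfolding X2_def[symmetric]
        by (simp add: t1 t2 inner_add_right algebra_simps)
    qed
    then have "(\<lambda>h. 2 * (inner Q (X1 ** lyap F (calJ h ** P + P ** transpose (calJ h)))
           + inner (lyap (transpose F) (transpose (calJ h) ** Q + Q ** calJ h)) (X1 ** P)))
        = (\<lambda>M2. inner M1 (hessE A B1 B2 C D C0 D0 b R M2))" by auto
    with d eqf show ?thesis by simp
  qed
  have c3: "hessE A B1 B2 C D C0 D0 b R M1 \<in> symm_mats \<and>
       inner M1 (hessE A B1 B2 C D C0 D0 b R M2) = inner (hessE A B1 B2 C D C0 D0 b R M1) M2"
    if h: "hurwitz (Acl R)" and M1: "M1 \<in> symm_mats" and M2: "M2 \<in> symm_mats" for R M1 M2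
  proof
    show "hessE A B1 B2 C D C0 D0 b R M1 \<in> symm_mats"
      by (simp add: hessE_eq symm_mats_def transpose_scalar calJ_adj_sym)
    define P where "P = PP R"
    define Q where "Q = QQ R"
    define F where "F = Acl R"
    have iF: "inj (lop F)" and iT: "inj (lop (transpose F))" using iP[OF h] iQ[OF h] by (simp_all add: F_def)
    have Pss: "transpose P = P" using Ps[OF h] by (simp add: P_def)
    have Qss: "transpose Q = Q" using Qs[OF h] by (simp add: Q_def)
    define Z where "Z = (\<lambda>X. Q ** lyap F (symp (X ** P)) + lyap (transpose F) (symp (Q ** X)) ** P)"
    have hz: "inner M (hessE A B1 B2 C D C0 D0 b R M') = 4 * inner (calJ M) (Z (calJ M'))"
      if "M \<in> symm_mats" for M M'
      using that by (simp add: calJ_adj_inner hessE_eq Z_def P_def Q_def F_def)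
    have cr: "inner X (Q ** lyap F (symp (Y ** P))) = inner Y (lyap (transpose F) (symp (Q ** X)) ** P)"
      for X Y :: "real^('n+'n)^('n+'n)" by (rule cross_term[OF iF iT Qss Pss])
    have "inner (calJ M1) (Z (calJ M2)) = inner (calJ M2) (Z (calJ M1))"
      unfolding Z_def inner_add_right cr[of "calJ M1" "calJ M2"] cr[of "calJ M2" "calJ M1"] by simp
    then show "inner M1 (hessE A B1 B2 C D C0 D0 b R M2) = inner (hessE A B1 B2 C D C0 D0 b R M1) M2"
      using hz[OF M1, of M2] hz[OF M2, of M1] by (simp add: inner_commute)
  qed
  show ?thesis
    apply (rule exI[of _ DE])
    using c1 c2 c3 unfolding Acl_def by (blast intro: has_derivative_at_withinI)
qed


end
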